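(* Let $G$ be a finite connected graph, $T_0$ a spanning tree of $G$, $N=|E(G-T_0)|$, with edges of $E(G-T_0)$ listed $e_1,\dots,e_N$. Then the characteristic polynomial of the mesh matrix is $$\det(X\,Id-Mesh(G,T_0))=X^N+\sum_{j=1}^N(-1)^j\,b_j\,X^{N-j},$$ where $b_j$ is the sum, over all choices of indices $1\le k_1<k_2<\dots<k_j\le N$, of the number of spanning trees of the subgraph $T_0\cup e_{k_1}\cup\dots\cup e_{k_j}$.
   Context: Orient all edges of $G$; let $\vec e_j$ go from $P_j$ to $Q_j$. Set $D(\vec e_j)=0$ if $e_j$ is a loop, and otherwise let $D(\vec e_j)$ be the 1-chain of the unique simple path in $T_0$ from $Q_j$ to $P_j$ (edges oriented along the path). Let $Z[j]=\vec e_j+D(\vec e_j)$. The mesh matrix is $Mesh(G,T_0)=(\langle Z[i],Z[j]\rangle)_{1\le i,j\le N}$, where $\langle\cdot,\cdot\rangle$ is the inner product on 1-chains with the oriented edges orthonormal. *)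

theory Defs
  imports "Jordan_Normal_Form.Char_Poly"
begin

text \<open>Finite (multi)graphs with vertex set V, edge set E; each edge e is oriented from
  src e (P) to tgt e (Q). Loops and parallel edges are allowed.\<close>

definition graph :: "'v set \<Rightarrow> 'e set \<Rightarrow> ('e \<Rightarrow> 'v) \<Rightarrow> ('e \<Rightarrow> 'v) \<Rightarrow> bool" where
  "graph V E src tgt \<longleftrightarrow> finite V \<and> finite E \<and> (\<forall>e\<in>E. src e \<in> V \<and> tgt e \<in> V)"

fun walk :: "('e \<Rightarrow> 'v) \<Rightarrow> ('e \<Rightarrow> 'v) \<Rightarrow> 'e set \<Rightarrow> 'v \<Rightarrow> ('e \<times> bool) list \<Rightarrow> 'v \<Rightarrow> bool" where
  "walk src tgt F u [] v \<longleftrightarrow> u = v"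
| "walk src tgt F u ((e, d) # p) v \<longleftrightarrow> e \<in> F \<and>
     (if d then src e = u \<and> walk src tgt F (tgt e) p v
           else tgt e = u \<and> walk src tgt F (src e) p v)"

fun walk_verts :: "('e \<Rightarrow> 'v) \<Rightarrow> ('e \<Rightarrow> 'v) \<Rightarrow> 'v \<Rightarrow> ('e \<times> bool) list \<Rightarrow> 'v list" where
  "walk_verts src tgt u [] = [u]"
| "walk_verts src tgt u ((e, d) # p) = u # walk_verts src tgt (if d then tgt e else src e) p"

definition simple_path :: "('e \<Rightarrow> 'v) \<Rightarrow> ('e \<Rightarrow> 'v) \<Rightarrow> 'e set \<Rightarrow> 'v \<Rightarrow> ('e \<times> bool) list \<Rightarrow> 'v \<Rightarrow> bool" where
  "simple_path src tgt F u p v \<longleftrightarrow> walk src tgt F u p v \<and> distinct (walk_verts src tgt u p)"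

definition connected_on :: "('e \<Rightarrow> 'v) \<Rightarrow> ('e \<Rightarrow> 'v) \<Rightarrow> 'v set \<Rightarrow> 'e set \<Rightarrow> bool" where
  "connected_on src tgt V F \<longleftrightarrow> (\<forall>u\<in>V. \<forall>v\<in>V. \<exists>p. walk src tgt F u p v)"

text \<open>Acyclic: no edge of F lies on a cycle, i.e. no edge (including loops) whose endpoints
  are joined by a walk avoiding it.\<close>
definition acyclic_edges :: "('e \<Rightarrow> 'v) \<Rightarrow> ('e \<Rightarrow> 'v) \<Rightarrow> 'e set \<Rightarrow> bool" where
  "acyclic_edges src tgt F \<longleftrightarrow> (\<forall>e\<in>F. \<not> (\<exists>p. walk src tgt (F - {e}) (src e) p (tgt e)))"

definition spanning_tree :: "('e \<Rightarrow> 'v) \<Rightarrow> ('e \<Rightarrow> 'v) \<Rightarrow> 'v set \<Rightarrow> 'e set \<Rightarrow> 'e set \<Rightarrow> bool" where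
  "spanning_tree src tgt V F T \<longleftrightarrow> T \<subseteq> F \<and> connected_on src tgt V T \<and> acyclic_edges src tgt T"

definition num_spanning_trees :: "('e \<Rightarrow> 'v) \<Rightarrow> ('e \<Rightarrow> 'v) \<Rightarrow> 'v set \<Rightarrow> 'e set \<Rightarrow> nat" where
  "num_spanning_trees src tgt V F = card {T. spanning_tree src tgt V F T}"

text \<open>1-chains: functions from edges to real coefficients (w.r.t. the fixed orientation).\<close>
definition path_chain :: "('e \<times> bool) list \<Rightarrow> 'e \<Rightarrow> real" where
  "path_chain p f = sum_list (map (\<lambda>(e, d). if e = f then (if d then 1 else -1) else 0) p)"

definition D_chain :: "('e \<Rightarrow> 'v) \<Rightarrow> ('e \<Rightarrow> 'v) \<Rightarrow> 'e set \<Rightarrow> 'e \<Rightarrow> 'e \<Rightarrow> real" where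
  "D_chain src tgt T0 e =
     (if src e = tgt e then (\<lambda>_. 0)
      else path_chain (THE p. simple_path src tgt T0 (tgt e) p (src e)))"

definition Z_chain :: "('e \<Rightarrow> 'v) \<Rightarrow> ('e \<Rightarrow> 'v) \<Rightarrow> 'e set \<Rightarrow> 'e \<Rightarrow> 'e \<Rightarrow> real" where
  "Z_chain src tgt T0 e = (\<lambda>f. (if f = e then 1 else 0) + D_chain src tgt T0 e f)"

definition chain_inner :: "'e set \<Rightarrow> ('e \<Rightarrow> real) \<Rightarrow> ('e \<Rightarrow> real) \<Rightarrow> real" where
  "chain_inner E c d = (\<Sum>f\<in>E. c f * d f)"

text \<open>Mesh matrix for the listing es = [e_1,...,e_N] of E(G - T0) (0-based indices).\<close>
definition mesh_matrix :: "('e \<Rightarrow> 'v) \<Rightarrow> ('e \<Rightarrow> 'v) \<Rightarrow> 'e set \<Rightarrow> 'e set \<Rightarrow> 'e list \<Rightarrow> real mat" where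
  "mesh_matrix src tgt E T0 es = mat (length es) (length es)
     (\<lambda>(i, j). chain_inner E (Z_chain src tgt T0 (es ! i)) (Z_chain src tgt T0 (es ! j)))"

end

theory Submission
  imports Defs
begin

definition detS :: "('a \<Rightarrow> 'a \<Rightarrow> 'b::comm_ring_1) \<Rightarrow> 'a set \<Rightarrow> 'b" where
  "detS A K = (\<Sum>p\<in>{p. p permutes K}. of_int (sign p) * (\<Prod>i\<in>K. A i (p i)))"

lemma detS_cong:
  assumes "\<And>i k. i \<in> K \<Longrightarrow> k \<in> K \<Longrightarrow> A i k = B i k"
  shows "detS A K = detS B K"
  unfolding detS_def
proof (rule sum.cong[OF refl])
  fix p assume "p \<in> {p. p permutes K}"
  then have "p permutes K" by simp
  then show "of_int (sign p) * (\<Prod>i\<in>K. A i (p i)) = of_int (sign p) * (\<Prod>i\<in>K. B i (p i))"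
    using assms permutes_in_image by (metis (no_types, lifting) prod.cong)
qed

lemma detS_row_perm:
  assumes K: "finite K" and s: "s permutes K"
  shows "detS (\<lambda>i k. A (s i) k) K = of_int (sign s) * detS A K"
proof -
  have ps: "permutation s" using K s permutation_permutes by blast
  have "detS (\<lambda>i k. A (s i) k) K =
      (\<Sum>p\<in>{p. p permutes K}. of_int (sign p) * (\<Prod>i\<in>K. A i (p (inv_into UNIV s i))))"
    unfolding detS_def
  proof (rule sum.cong[OF refl])
    fix p assume "p \<in> {p. p permutes K}"
    have "(\<Prod>i\<in>K. A (s i) (p i)) = (\<Prod>i\<in>K. (\<lambda>i. A i (p (inv_into UNIV s i))) (s i))"
      using permutes_inverses(2)[OF s] by simp
    also have "\<dots> = (\<Prod>i\<in>K. A i (p (inv_into UNIV s i)))"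
      using prod.reindex_bij_betw[OF permutes_imp_bij[OF s], of "\<lambda>i. A i (p (inv_into UNIV s i))"] by simp
    finally show "of_int (sign p) * (\<Prod>i\<in>K. A (s i) (p i)) = of_int (sign p) * (\<Prod>i\<in>K. A i (p (inv_into UNIV s i)))"
      by simp
  qed
  also have "\<dots> = (\<Sum>q\<in>{p. p permutes K}. of_int (sign (q \<circ> s)) * (\<Prod>i\<in>K. A i (q i)))"
  proof (rule sum.reindex_bij_witness[where i="\<lambda>q. q \<circ> s" and j="\<lambda>p. p \<circ> inv_into UNIV s"])
    fix q assume "q \<in> {p. p permutes K}"
    then show "q \<circ> s \<circ> inv_into UNIV s = q" using permutes_inverses(1)[OF s] by (auto simp: fun_eq_iff)
    show "q \<circ> s \<in> {p. p permutes K}" using \<open>q \<in> _\<close> s permutes_compose by blast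
  next
    fix p assume "p \<in> {p. p permutes K}"
    then show "p \<circ> inv_into UNIV s \<circ> s = p" using permutes_inverses(2)[OF s] by (auto simp: fun_eq_iff)
    show "p \<circ> inv_into UNIV s \<in> {p. p permutes K}" using \<open>p \<in> _\<close> s permutes_compose permutes_inv by blast
    show "of_int (sign (p \<circ> inv_into UNIV s \<circ> s)) * (\<Prod>i\<in>K. A i ((p \<circ> inv_into UNIV s) i)) =
          of_int (sign p) * (\<Prod>i\<in>K. A i (p (inv_into UNIV s i)))"
      using permutes_inverses(2)[OF s] by (simp add: o_assoc[symmetric] fun_eq_iff comp_def)
  qed
  also have "\<dots> = of_int (sign s) * detS A K"
    unfolding detS_def sum_distrib_left
  proof (rule sum.cong[OF refl])
    fix q assume "q \<in> {p. p permutes K}"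
    then have "permutation q" using K permutation_permutes by blast
    then show "of_int (sign (q \<circ> s)) * (\<Prod>i\<in>K. A i (q i)) = of_int (sign s) * (of_int (sign q) * (\<Prod>i\<in>K. A i (q i)))"
      using ps by (simp add: sign_compose)
  qed
  finally show ?thesis .
qed

lemma detS_transpose:
  assumes K: "finite K"
  shows "detS (\<lambda>i k. A k i) K = detS A K"
  unfolding detS_def
proof (rule sum.reindex_bij_witness[where i="inv_into UNIV" and j="inv_into UNIV"])
  fix p assume p: "p \<in> {p. p permutes K}"
  then have pp: "p permutes K" by simp
  show "inv_into UNIV (inv_into UNIV p) = p" using pp by (simp add: permutes_inv_inv)
  show "inv_into UNIV p \<in> {p. p permutes K}" using pp permutes_inv by blast
  have perm: "permutation p" using K pp permutation_permutes by blast
  have "(\<Prod>i\<in>K. A i (inv_into UNIV p i)) = (\<Prod>i\<in>K. (\<lambda>i. A i (inv_into UNIV p i)) (p i))"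
    using prod.reindex_bij_betw[OF permutes_imp_bij[OF pp], of "\<lambda>i. A i (inv_into UNIV p i)"] by simp
  also have "\<dots> = (\<Prod>i\<in>K. A (p i) i)" using permutes_inverses(2)[OF pp] by simp
  finally show "of_int (sign (inv_into UNIV p)) * (\<Prod>i\<in>K. A i (inv_into UNIV p i)) = of_int (sign p) * (\<Prod>i\<in>K. A (p i) i)"
    using sign_inverse[OF perm] by simp
next
  fix p assume p: "p \<in> {p. p permutes K}"
  then have pp: "p permutes K" by simp
  show "inv_into UNIV (inv_into UNIV p) = p" using pp by (simp add: permutes_inv_inv)
  show "inv_into UNIV p \<in> {p. p permutes K}" using pp permutes_inv by blast
qed

lemma detS_eq_rows:
  fixes A :: "'a \<Rightarrow> 'a \<Rightarrow> real"
  assumes K: "finite K" and i: "i \<in> K" "j \<in> K" "i \<noteq> j" and eq: "\<And>k. A i k = A j k"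
  shows "detS A K = 0"
proof -
  have s: "Transposition.transpose i j permutes K" using i by (simp add: permutes_swap_id)
  have "(\<lambda>l k. A (Transposition.transpose i j l) k) = A"
    using eq by (auto simp: fun_eq_iff transpose_def)
  then have "detS A K = of_int (sign (Transposition.transpose i j)) * detS A K"
    using detS_row_perm[OF K s, of A] by simp
  then show ?thesis using i by (simp add: sign_swap_id)
qed


lemma detS_expand:
  fixes A :: "'a \<Rightarrow> 'f \<Rightarrow> real"
  assumes K: "finite K" and F: "finite F"
  shows "detS (\<lambda>i k. \<Sum>f\<in>F. A i f * B f k) K =
    (\<Sum>g\<in>{g. g \<in> K \<rightarrow>\<^sub>E F \<and> inj_on g K}. (\<Prod>i\<in>K. A i (g i)) * detS (\<lambda>i k. B (g i) k) K)"
proof -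
  have "detS (\<lambda>i k. \<Sum>f\<in>F. A i f * B f k) K =
     (\<Sum>p\<in>{p. p permutes K}. \<Sum>g\<in>K \<rightarrow>\<^sub>E F. of_int (sign p) * ((\<Prod>i\<in>K. A i (g i)) * (\<Prod>i\<in>K. B (g i) (p i))))"
    unfolding detS_def
    by (intro sum.cong refl, subst prod_sum_PiE[OF K], use F in simp,
        simp add: sum_distrib_left prod.distrib)
  also have "\<dots> = (\<Sum>g\<in>K \<rightarrow>\<^sub>E F. \<Sum>p\<in>{p. p permutes K}. of_int (sign p) * ((\<Prod>i\<in>K. A i (g i)) * (\<Prod>i\<in>K. B (g i) (p i))))"
    by (rule sum.swap)
  also have "\<dots> = (\<Sum>g\<in>K \<rightarrow>\<^sub>E F. (\<Prod>i\<in>K. A i (g i)) * detS (\<lambda>i k. B (g i) k) K)"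
    unfolding detS_def sum_distrib_left by (intro sum.cong refl) (simp add: algebra_simps)
  also have "\<dots> = (\<Sum>g\<in>{g. g \<in> K \<rightarrow>\<^sub>E F \<and> inj_on g K}. (\<Prod>i\<in>K. A i (g i)) * detS (\<lambda>i k. B (g i) k) K)"
  proof (rule sum.mono_neutral_right)
    show "finite (K \<rightarrow>\<^sub>E F)" using K F by (simp add: finite_PiE)
    show "{g. g \<in> K \<rightarrow>\<^sub>E F \<and> inj_on g K} \<subseteq> K \<rightarrow>\<^sub>E F" by auto
    show "\<forall>g\<in>(K \<rightarrow>\<^sub>E F) - {g. g \<in> K \<rightarrow>\<^sub>E F \<and> inj_on g K}. (\<Prod>i\<in>K. A i (g i)) * detS (\<lambda>i k. B (g i) k) K = 0"
    proof
      fix g assume "g \<in> (K \<rightarrow>\<^sub>E F) - {g. g \<in> K \<rightarrow>\<^sub>E F \<and> inj_on g K}"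
      then have "\<not> inj_on g K" by auto
      then obtain i j where "i \<in> K" "j \<in> K" "i \<noteq> j" "g i = g j" unfolding inj_on_def by blast
      then have "detS (\<lambda>i k. B (g i) k) K = 0"
        using detS_eq_rows[OF K, of i j "\<lambda>i k. B (g i) k"] by simp
      then show "(\<Prod>i\<in>K. A i (g i)) * detS (\<lambda>i k. B (g i) k) K = 0" by simp
    qed
  qed
  finally show ?thesis .
qed

lemma inj_PiE_permutes:
  assumes K: "finite K" and g: "g \<in> K \<rightarrow>\<^sub>E K" "inj_on g K"
  shows "(\<lambda>x. if x \<in> K then g x else x) permutes K"
proof (rule bij_imp_permutes)
  have "g ` K = K" using endo_inj_surj[OF K _ g(2)] g(1) by auto
  then show "bij_betw (\<lambda>x. if x \<in> K then g x else x) K K"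
    unfolding bij_betw_def using g(2) by (auto simp: inj_on_def image_def)
qed auto

lemma detS_mult:
  fixes A :: "'a \<Rightarrow> 'a \<Rightarrow> real"
  assumes K: "finite K"
  shows "detS (\<lambda>i k. \<Sum>j\<in>K. A i j * B j k) K = detS A K * detS B K"
proof -
  have "detS (\<lambda>i k. \<Sum>j\<in>K. A i j * B j k) K =
    (\<Sum>g\<in>{g. g \<in> K \<rightarrow>\<^sub>E K \<and> inj_on g K}. (\<Prod>i\<in>K. A i (g i)) * detS (\<lambda>i k. B (g i) k) K)"
    by (rule detS_expand[OF K K])
  also have "\<dots> = (\<Sum>p\<in>{p. p permutes K}. (\<Prod>i\<in>K. A i (p i)) * detS (\<lambda>i k. B (p i) k) K)"
  proof (rule sum.reindex_bij_witness[where i="\<lambda>p. restrict p K" and j="\<lambda>g x. if x \<in> K then g x else x"])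
    fix g assume g: "g \<in> {g. g \<in> K \<rightarrow>\<^sub>E K \<and> inj_on g K}"
    then show "restrict (\<lambda>x. if x \<in> K then g x else x) K = g"
      by (auto simp: fun_eq_iff PiE_def extensional_def)
    show "(\<lambda>x. if x \<in> K then g x else x) \<in> {p. p permutes K}"
      using inj_PiE_permutes[OF K] g by auto
    show "(\<Prod>i\<in>K. A i (if i \<in> K then g i else i)) * detS (\<lambda>i k. B (if i \<in> K then g i else i) k) K =
          (\<Prod>i\<in>K. A i (g i)) * detS (\<lambda>i k. B (g i) k) K"
      by (intro arg_cong2[where f="(*)"] prod.cong detS_cong) auto
  next
    fix p assume p: "p \<in> {p. p permutes K}"
    then show "(\<lambda>x. if x \<in> K then restrict p K x else x) = p"
      by (auto simp: fun_eq_iff permutes_not_in)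
    show "restrict p K \<in> {g. g \<in> K \<rightarrow>\<^sub>E K \<and> inj_on g K}"
      using p permutes_in_image[of p K] permutes_inj_on[of p K]
      by (auto simp: inj_on_def)
  qed
  also have "\<dots> = (\<Sum>p\<in>{p. p permutes K}. (\<Prod>i\<in>K. A i (p i)) * (of_int (sign p) * detS B K))"
    by (intro sum.cong refl, simp add: detS_row_perm[OF K])
  also have "\<dots> = detS A K * detS B K"
    unfolding detS_def sum_distrib_right by (intro sum.cong refl) (simp add: algebra_simps)
  finally show ?thesis .
qed

lemma detS_id:
  assumes K: "finite K"
  shows "detS (\<lambda>i k. if i = k then 1 else 0) K = (1::real)"
proof -
  have "detS (\<lambda>i k. if i = k then 1 else 0) K = (
     (\<Sum>p\<in>{p. p permutes K}. if p = id then 1 else (0::real)))"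
    unfolding detS_def
  proof (rule sum.cong[OF refl])
    fix p assume p: "p \<in> {p. p permutes K}"
    show "of_int (sign p) * (\<Prod>i\<in>K. if i = p i then 1 else 0) = (if p = id then 1 else (0::real))"
    proof (cases "p = id")
      case True then show ?thesis by (simp add: sign_id)
    next
      case False
      then obtain i where "p i \<noteq> i" by (metis eq_id_iff)
      then have "i \<in> K" using p permutes_not_in by fastforce
      then have "(\<Prod>i\<in>K. if i = p i then 1 else (0::real)) = 0"
        using K \<open>p i \<noteq> i\<close> by (intro prod_zero) (auto intro!: bexI[of _ i])
      then show ?thesis using False by simp
    qed
  qed
  also have "\<dots> = 1" using K permutes_id by (simp add: finite_permutations)
  finally show ?thesis .
qed

lemma detS_dep_cols:
  fixes B :: "'a \<Rightarrow> 'a \<Rightarrow> real"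
  assumes K: "finite K" and k0: "k0 \<in> K" "a k0 \<noteq> 0"
    and dep: "\<And>i. i \<in> K \<Longrightarrow> (\<Sum>k\<in>K. B i k * a k) = 0"
  shows "detS B K = 0"
proof -
  define C where "C = (\<lambda>k k'. if k' = k0 then a k else if k = k' then 1 else (0::real))"
  have "detS (\<lambda>i k. \<Sum>j\<in>K. B i j * C j k) K = 0"
    unfolding detS_def
  proof (intro sum.neutral ballI)
    fix p assume p: "p \<in> {p. p permutes K}"
    then have pp: "p permutes K" by simp
    let ?i = "inv_into UNIV p k0"
    have "?i \<in> K" using pp k0 by (simp add: permutes_inv permutes_in_image)
    moreover have "p ?i = k0" using permutes_inverses(1)[OF pp] by simp
    ultimately have "(\<Prod>i\<in>K. \<Sum>j\<in>K. B i j * C j (p i)) = 0"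
      using K dep unfolding C_def by (intro prod_zero) (auto intro!: bexI[of _ ?i])
    then show "of_int (sign p) * (\<Prod>i\<in>K. \<Sum>j\<in>K. B i j * C j (p i)) = 0" by simp
  qed
  moreover have "detS C K = a k0"
  proof -
    have "detS C K = (\<Sum>p\<in>{p. p permutes K}. if p = id then a k0 else 0)"
      unfolding detS_def
    proof (rule sum.cong[OF refl])
      fix p assume p: "p \<in> {p. p permutes K}"
      then have pp: "p permutes K" by simp
      show "of_int (sign p) * (\<Prod>i\<in>K. C i (p i)) = (if p = id then a k0 else 0)"
      proof (cases "p = id")
        case True
        have "(\<Prod>i\<in>K. C i i) = C k0 k0 * (\<Prod>i\<in>K - {k0}. C i i)"
          using K k0 by (simp add: prod.remove)
        also have "\<dots> = a k0" unfolding C_def by simp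
        finally show ?thesis using True by (simp add: sign_id)
      next
        case False
        then obtain i where i: "p i \<noteq> i" by (metis eq_id_iff)
        then have iK: "i \<in> K" using pp permutes_not_in by fastforce
        have "\<exists>j\<in>K. C j (p j) = 0"
        proof (cases "p i = k0")
          case True
          then have "i \<noteq> k0" using i by auto
          then have "p k0 \<noteq> k0" using True permutes_inj[OF pp] by (metis injD)
          then show ?thesis using k0 unfolding C_def by (intro bexI[of _ k0]) auto
        next
          case False
          then show ?thesis using iK i unfolding C_def by (intro bexI[of _ i]) auto
        qed
        then have "(\<Prod>i\<in>K. C i (p i)) = 0" using K by (intro prod_zero) auto
        then show ?thesis using False by simp
      qed
    qed
    also have "\<dots> = a k0" using K permutes_id by (simp add: finite_permutations)
    finally show ?thesis .
  qed
  ultimately have "detS B K * a k0 = 0" using detS_mult[OF K, of B C] by simp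
  then show ?thesis using k0 by simp
qed

lemma detS_dep_rows:
  fixes B :: "'a \<Rightarrow> 'a \<Rightarrow> real"
  assumes K: "finite K" and k0: "k0 \<in> K" "a k0 \<noteq> 0"
    and dep: "\<And>k. k \<in> K \<Longrightarrow> (\<Sum>i\<in>K. a i * B i k) = 0"
  shows "detS B K = 0"
proof -
  have "detS (\<lambda>i k. B k i) K = 0"
    by (rule detS_dep_cols[of K k0 a]) (use K k0 dep in \<open>simp_all add: mult.commute\<close>)
  then show ?thesis using detS_transpose[OF K, of B] by simp
qed

lemma detS_Ints:
  fixes A :: "'a \<Rightarrow> 'a \<Rightarrow> real"
  assumes K: "finite K" and A: "\<And>i k. i \<in> K \<Longrightarrow> k \<in> K \<Longrightarrow> A i k \<in> \<int>"
  shows "detS A K \<in> \<int>"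
  unfolding detS_def
proof (intro Ints_sum Ints_mult Ints_prod)
  fix p i assume "p \<in> {p. p permutes K}" "i \<in> K"
  then show "A i (p i) \<in> \<int>" using A permutes_in_image by fastforce
qed auto


context
  fixes src :: "'e \<Rightarrow> 'v" and tgt :: "'e \<Rightarrow> 'v"
begin

definition cutv :: "'v set \<Rightarrow> 'e \<Rightarrow> real" where
  "cutv U f = of_bool (src f \<in> U) - of_bool (tgt f \<in> U)"

definition circ :: "'e set \<Rightarrow> ('e \<Rightarrow> real) \<Rightarrow> bool" where
  "circ E y \<longleftrightarrow> (\<forall>U. (\<Sum>f\<in>E. y f * cutv U f) = 0)"

definition nxt :: "'e \<times> bool \<Rightarrow> 'v" where
  "nxt x = (if snd x then tgt (fst x) else src (fst x))"

lemma walk_Cons_iff: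
  "walk src tgt F u (x # p) v \<longleftrightarrow> fst x \<in> F \<and> (if snd x then src (fst x) else tgt (fst x)) = u
     \<and> walk src tgt F (nxt x) p v"
  by (cases x) (auto simp: nxt_def)

lemma walk_verts_Cons: "walk_verts src tgt u (x # p) = u # walk_verts src tgt (nxt x) p"
  by (cases x) (auto simp: nxt_def)

lemma walk_append:
  "walk src tgt F u (p @ q) v \<longleftrightarrow> (\<exists>w. walk src tgt F u p w \<and> walk src tgt F w q v)"
  by (induction p arbitrary: u) (auto simp: walk_Cons_iff)

lemma walk_edges: "walk src tgt F u p v \<Longrightarrow> fst ` set p \<subseteq> F"
  by (induction p arbitrary: u) (auto simp: walk_Cons_iff)

lemma walk_mono: "walk src tgt F u p v \<Longrightarrow> fst ` set p \<subseteq> F' \<Longrightarrow> walk src tgt F' u p v"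
  by (induction p arbitrary: u) (auto simp: walk_Cons_iff)

definition rwalk :: "('e \<times> bool) list \<Rightarrow> ('e \<times> bool) list" where
  "rwalk p = rev (map (\<lambda>(e, d). (e, \<not> d)) p)"

lemma walk_rev: "walk src tgt F u p v \<Longrightarrow> walk src tgt F v (rwalk p) u"
proof (induction p arbitrary: u)
  case Nil then show ?case by (simp add: rwalk_def)
next
  case (Cons x p)
  obtain e d where x: "x = (e, d)" by (cases x)
  show ?case using Cons x by (auto simp: rwalk_def walk_append split: if_splits)
qed

lemma fst_set_rwalk[simp]: "fst ` set (rwalk p) = fst ` set p"
  by (force simp: rwalk_def image_iff)

lemma walk_last_in: "walk src tgt F u p v \<Longrightarrow> v \<in> set (walk_verts src tgt u p)"
  by (induction p arbitrary: u) (auto simp: walk_Cons_iff walk_verts_Cons)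

lemma walk_edge_verts:
  "walk src tgt F u p v \<Longrightarrow> x \<in> set p \<Longrightarrow>
    src (fst x) \<in> set (walk_verts src tgt u p) \<and> tgt (fst x) \<in> set (walk_verts src tgt u p)"
proof (induction p arbitrary: u)
  case Nil then show ?case by simp
next
  case (Cons y p)
  show ?case
  proof (cases "x = y")
    case True
    have "nxt y \<in> set (walk_verts src tgt (nxt y) p)"
      by (cases p) (auto simp: walk_verts_Cons)
    then show ?thesis using Cons.prems True
      by (auto simp: walk_Cons_iff walk_verts_Cons nxt_def split: if_splits)
  next
    case False
    then show ?thesis using Cons by (auto simp: walk_Cons_iff walk_verts_Cons)
  qed
qed

lemma simple_suffix:
  "walk src tgt F w q v \<Longrightarrow> distinct (walk_verts src tgt w q) \<Longrightarrow> u \<in> set (walk_verts src tgt w q)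
   \<Longrightarrow> \<exists>q2. simple_path src tgt F u q2 v"
proof (induction q arbitrary: w)
  case Nil then show ?case by (auto simp: simple_path_def intro!: exI[of _ "[]"])
next
  case (Cons x q)
  show ?case
  proof (cases "u = w")
    case True then show ?thesis using Cons.prems by (auto simp: simple_path_def)
  next
    case False
    then show ?thesis using Cons by (auto simp: walk_Cons_iff walk_verts_Cons)
  qed
qed

lemma walk_simple: "walk src tgt F u p v \<Longrightarrow> \<exists>q. simple_path src tgt F u q v"
proof (induction p arbitrary: u)
  case Nil then show ?case by (intro exI[of _ "[]"]) (auto simp: simple_path_def)
next
  case (Cons x p)
  then have x: "fst x \<in> F" "walk src tgt F (nxt x) p v" by (auto simp: walk_Cons_iff)
  then obtain q where q: "simple_path src tgt F (nxt x) q v" using Cons.IH by blast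
  show ?case
  proof (cases "u \<in> set (walk_verts src tgt (nxt x) q)")
    case True
    then show ?thesis using q simple_suffix unfolding simple_path_def by blast
  next
    case False
    then show ?thesis using q Cons.prems
      by (intro exI[of _ "x # q"]) (auto simp: simple_path_def walk_Cons_iff walk_verts_Cons)
  qed
qed

lemma acyc_no_walk:
  "acyclic_edges src tgt F \<Longrightarrow> e \<in> F \<Longrightarrow> walk src tgt (F - {e}) (src e) p (tgt e) \<Longrightarrow> False"
  unfolding acyclic_edges_def by blast

lemma simple_unique:
  assumes ac: "acyclic_edges src tgt F"
  shows "simple_path src tgt F u p v \<Longrightarrow> simple_path src tgt F u q v \<Longrightarrow> p = q"
proof (induction p arbitrary: u q)
  case Nil
  then have uv: "u = v" by (simp add: simple_path_def)
  show ?case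
  proof (cases q)
    case (Cons y q')
    then have "walk src tgt F (nxt y) q' v" "distinct (u # walk_verts src tgt (nxt y) q')"
      using Nil.prems by (auto simp: simple_path_def walk_Cons_iff walk_verts_Cons)
    then show ?thesis using walk_last_in[of F "nxt y" q' v] uv by auto
  qed simp
next
  case (Cons x p)
  note P = Cons.prems(1)[unfolded simple_path_def]
  note Q = Cons.prems(2)[unfolded simple_path_def]
  note IH = Cons.IH
  show ?case
  proof (cases q)
    case Nil
    then have uv: "u = v" using Q by simp
    have "walk src tgt F (nxt x) p v" "distinct (u # walk_verts src tgt (nxt x) p)"
      using P by (auto simp: walk_Cons_iff walk_verts_Cons)
    then show ?thesis using walk_last_in[of F "nxt x" p v] uv by auto
  next
    case (Cons y q')
    note qy = this
    have Px: "fst x \<in> F" "(if snd x then src (fst x) else tgt (fst x)) = u"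
      "walk src tgt F (nxt x) p v" "distinct (walk_verts src tgt (nxt x) p)"
      "u \<notin> set (walk_verts src tgt (nxt x) p)"
      using P by (auto simp: walk_Cons_iff walk_verts_Cons)
    have Qy: "fst y \<in> F" "(if snd y then src (fst y) else tgt (fst y)) = u"
      "walk src tgt F (nxt y) q' v" "distinct (walk_verts src tgt (nxt y) q')"
      "u \<notin> set (walk_verts src tgt (nxt y) q')"
      using Q qy by (auto simp: walk_Cons_iff walk_verts_Cons)
    show ?thesis
    proof (cases "fst x = fst y")
      case same: True
      show ?thesis
      proof (cases "snd x = snd y")
        case True
        then have "x = y" using same by (simp add: prod_eq_iff)
        moreover have "p = q'" using IH[of "nxt x" q'] Px Qy \<open>x = y\<close>
          by (simp add: simple_path_def)
        ultimately show ?thesis using qy by simp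
      next
        case False
        then have "src (fst x) = tgt (fst x)" using Px(2) Qy(2) same by (auto split: if_splits)
        then have "walk src tgt (F - {fst x}) (src (fst x)) [] (tgt (fst x))" by simp
        then show ?thesis using acyc_no_walk[OF ac Px(1)] by blast
      qed
    next
      case False
      let ?e = "fst x"
      have uin: "src ?e = u \<or> tgt ?e = u" using Px(2) by (auto split: if_splits)
      have np: "?e \<notin> fst ` set p"
      proof
        assume "?e \<in> fst ` set p"
        then obtain z where "z \<in> set p" "fst z = ?e" by auto
        then show False using walk_edge_verts[OF Px(3) \<open>z \<in> set p\<close>] Px(5) uin by auto
      qed
      have nq: "?e \<notin> fst ` set q'"
      proof
        assume "?e \<in> fst ` set q'"
        then obtain z where "z \<in> set q'" "fst z = ?e" by auto
        then show False using walk_edge_verts[OF Qy(3) \<open>z \<in> set q'\<close>] Qy(5) uin by auto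
      qed
      have w1: "walk src tgt (F - {?e}) (nxt x) p v"
        by (rule walk_mono[OF Px(3)]) (use walk_edges[OF Px(3)] np in blast)
      have w2: "walk src tgt (F - {?e}) v (rwalk q') (nxt y)"
        by (rule walk_rev, rule walk_mono[OF Qy(3)]) (use walk_edges[OF Qy(3)] nq in blast)
      have w3: "walk src tgt (F - {?e}) (nxt y) [(fst y, \<not> snd y)] u"
        using Qy(1,2) False by (auto simp: nxt_def)
      have W: "walk src tgt (F - {?e}) (nxt x) (p @ rwalk q' @ [(fst y, \<not> snd y)]) u"
      proof -
        have "walk src tgt (F - {?e}) v (rwalk q' @ [(fst y, \<not> snd y)]) u"
          using w2 w3 walk_append by blast
        then show ?thesis using w1 walk_append by blast
      qed
      show ?thesis
      proof (cases "snd x")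
        case True
        then have "walk src tgt (F - {?e}) (src ?e) (rwalk (p @ rwalk q' @ [(fst y, \<not> snd y)])) (tgt ?e)"
          using walk_rev[OF W] Px(2) by (simp add: nxt_def)
        then show ?thesis using acyc_no_walk[OF ac Px(1)] by blast
      next
        case False
        then have "walk src tgt (F - {?e}) (src ?e) (p @ rwalk q' @ [(fst y, \<not> snd y)]) (tgt ?e)"
          using W Px(2) by (simp add: nxt_def)
        then show ?thesis using acyc_no_walk[OF ac Px(1)] by blast
      qed
    qed
  qed
qed

end


context
  fixes src :: "'e \<Rightarrow> 'v" and tgt :: "'e \<Rightarrow> 'v"
begin

lemma path_chain_Nil[simp]: "path_chain [] f = 0"
  by (simp add: path_chain_def)

lemma path_chain_Cons:
  "path_chain (x # p) f = (if fst x = f then (if snd x then 1 else -1) else 0) + path_chain p f"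
  by (cases x) (simp add: path_chain_def)

lemma path_chain_supp: "f \<notin> fst ` set p \<Longrightarrow> path_chain p f = 0"
  by (induction p) (auto simp: path_chain_Cons)

lemma path_chain_Ints: "path_chain p f \<in> \<int>"
  by (induction p) (auto simp: path_chain_Cons)

lemma sum_single_if:
  fixes h :: "'e \<Rightarrow> real"
  assumes "finite E" "e \<in> E"
  shows "(\<Sum>f\<in>E. (if f = e then c else 0) * h f) = c * h e"
proof -
  have "(\<Sum>f\<in>E. (if f = e then c else 0) * h f) = (\<Sum>f\<in>E. if f = e then c * h f else 0)"
    by (intro sum.cong) auto
  then show ?thesis using assms by simp
qed

lemma path_chain_cut:
  assumes E: "finite E" and F: "F \<subseteq> E"
  shows "walk src tgt F u p v \<Longrightarrow>
    (\<Sum>f\<in>E. path_chain p f * cutv src tgt U f) = of_bool (u \<in> U) - of_bool (v \<in> U)"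
proof (induction p arbitrary: u)
  case Nil then show ?case by simp
next
  case (Cons x p)
  have x: "fst x \<in> F" "(if snd x then src (fst x) else tgt (fst x)) = u"
    "walk src tgt F (nxt src tgt x) p v"
    using Cons.prems by (auto simp: walk_Cons_iff)
  have "(\<Sum>f\<in>E. path_chain (x # p) f * cutv src tgt U f) =
      (\<Sum>f\<in>E. (if f = fst x then (if snd x then 1 else -1) else 0) * cutv src tgt U f)
      + (\<Sum>f\<in>E. path_chain p f * cutv src tgt U f)"
    by (simp add: path_chain_Cons distrib_right sum.distrib eq_commute[of "fst x"])
  also have "(\<Sum>f\<in>E. (if f = fst x then (if snd x then 1 else -1) else 0) * cutv src tgt U f)
     = (if snd x then 1 else -1) * cutv src tgt U (fst x)"
    using x(1) F E by (intro sum_single_if) auto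
  also have "(\<Sum>f\<in>E. path_chain p f * cutv src tgt U f) =
      of_bool (nxt src tgt x \<in> U) - of_bool (v \<in> U)"
    using Cons.IH x(3) by simp
  finally show ?case using x(2) by (auto simp: cutv_def nxt_def)
qed

lemma circ_comb:
  assumes E: "finite E" and y: "circ src tgt E y" and S: "finite S"
    and b: "\<And>s. s \<in> S \<Longrightarrow> circ src tgt E (b s)"
  shows "circ src tgt E (\<lambda>f. y f - (\<Sum>s\<in>S. c s * b s f))"
  unfolding circ_def
proof
  fix U
  have "(\<Sum>f\<in>E. (y f - (\<Sum>s\<in>S. c s * b s f)) * cutv src tgt U f) =
     (\<Sum>f\<in>E. y f * cutv src tgt U f) - (\<Sum>f\<in>E. \<Sum>s\<in>S. c s * (b s f * cutv src tgt U f))"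
  proof -
    have "\<And>f. (y f - (\<Sum>s\<in>S. c s * b s f)) * cutv src tgt U f =
       y f * cutv src tgt U f - (\<Sum>s\<in>S. c s * (b s f * cutv src tgt U f))"
      by (simp only: left_diff_distrib sum_distrib_right mult.assoc)
    then show ?thesis by (simp only: sum_subtractf)
  qed
  also have "(\<Sum>f\<in>E. \<Sum>s\<in>S. c s * (b s f * cutv src tgt U f)) =
      (\<Sum>s\<in>S. c s * (\<Sum>f\<in>E. b s f * cutv src tgt U f))"
    by (subst sum.swap) (simp add: sum_distrib_left)
  also have "\<dots> = 0" using b unfolding circ_def by simp
  finally show "(\<Sum>f\<in>E. (y f - (\<Sum>s\<in>S. c s * b s f)) * cutv src tgt U f) = 0"
    using y unfolding circ_def by simp
qed

lemma walk_snoc_edge: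
  "walk src tgt F u p w \<Longrightarrow> e \<in> F \<Longrightarrow> src e = w \<Longrightarrow> walk src tgt F u (p @ [(e, True)]) (tgt e)"
  "walk src tgt F u p w \<Longrightarrow> e \<in> F \<Longrightarrow> tgt e = w \<Longrightarrow> walk src tgt F u (p @ [(e, False)]) (src e)"
  by (auto simp: walk_append)

lemma reach_closed:
  assumes "f \<in> F" "U = {w. \<exists>p. walk src tgt F u p w}"
  shows "src f \<in> U \<longleftrightarrow> tgt f \<in> U"
proof
  assume "src f \<in> U"
  then obtain p where "walk src tgt F u p (src f)" using assms(2) by blast
  from walk_snoc_edge(1)[OF this assms(1) refl] show "tgt f \<in> U" using assms(2) by blast
next
  assume "tgt f \<in> U"
  then obtain p where "walk src tgt F u p (tgt f)" using assms(2) by blast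
  from walk_snoc_edge(2)[OF this assms(1) refl] show "src f \<in> U" using assms(2) by blast
qed

lemma forest_zero:
  assumes E: "finite E" and T: "T \<subseteq> E" and ac: "acyclic_edges src tgt T"
    and y: "circ src tgt E y" and out: "\<And>f. f \<in> E \<Longrightarrow> f \<notin> T \<Longrightarrow> y f = 0"
    and f: "f \<in> T"
  shows "y f = 0"
proof -
  define U where "U = {w. \<exists>p. walk src tgt (T - {f}) (src f) p w}"
  have z: "y f' * cutv src tgt U f' = 0" if "f' \<in> E - {f}" for f'
  proof (cases "f' \<in> T")
    case True
    then have "f' \<in> T - {f}" using that by auto
    then have "src f' \<in> U \<longleftrightarrow> tgt f' \<in> U" by (rule reach_closed[OF _ U_def])
    then show ?thesis by (simp add: cutv_def)
  next
    case False then show ?thesis using out that by simp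
  qed
  have fE: "f \<in> E" using f T by auto
  have "(\<Sum>f'\<in>E. y f' * cutv src tgt U f') = y f * cutv src tgt U f + (\<Sum>f'\<in>E - {f}. y f' * cutv src tgt U f')"
    using E fE by (simp add: sum.remove)
  also have "(\<Sum>f'\<in>E - {f}. y f' * cutv src tgt U f') = 0"
    by (rule sum.neutral) (use z in blast)
  also have "src f \<in> U" unfolding U_def by (rule CollectI, rule exI[of _ "[]"]) simp
  moreover have "tgt f \<notin> U"
  proof
    assume "tgt f \<in> U"
    then obtain p where "walk src tgt (T - {f}) (src f) p (tgt f)" unfolding U_def by blast
    from acyc_no_walk[OF ac f this] show False .
  qed
  ultimately have "(\<Sum>f'\<in>E. y f' * cutv src tgt U f') = y f" by (simp add: cutv_def)
  then show ?thesis using y unfolding circ_def by simp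
qed

lemma D_walk:
  assumes gr: "graph V E src tgt" and st: "spanning_tree src tgt V E T0" and e: "e \<in> E"
  shows "\<exists>p. walk src tgt T0 (tgt e) p (src e) \<and> D_chain src tgt T0 e = path_chain p"
proof (cases "src e = tgt e")
  case True
  then show ?thesis by (intro exI[of _ "[]"]) (simp add: D_chain_def fun_eq_iff)
next
  case False
  have V: "src e \<in> V" "tgt e \<in> V" using gr e by (auto simp: graph_def)
  have con: "connected_on src tgt V T0" and ac: "acyclic_edges src tgt T0"
    using st by (auto simp: spanning_tree_def)
  obtain p0 where "walk src tgt T0 (tgt e) p0 (src e)" using con V unfolding connected_on_def by blast
  then have "\<exists>q. simple_path src tgt T0 (tgt e) q (src e)" by (rule walk_simple)
  then obtain q where q: "simple_path src tgt T0 (tgt e) q (src e)" by blast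
  have the_eq: "(THE p. simple_path src tgt T0 (tgt e) p (src e)) = q"
  proof (rule the_equality)
    show "simple_path src tgt T0 (tgt e) q (src e)" by (rule q)
  next
    fix p assume "simple_path src tgt T0 (tgt e) p (src e)"
    from simple_unique[OF ac this q] show "p = q" .
  qed
  have D: "D_chain src tgt T0 e = path_chain q"
    unfolding D_chain_def using False the_eq by simp
  have "walk src tgt T0 (tgt e) q (src e)" using q by (simp add: simple_path_def)
  then show ?thesis using D by blast
qed

lemma Z_circ:
  assumes gr: "graph V E src tgt" and st: "spanning_tree src tgt V E T0" and e: "e \<in> E"
  shows "circ src tgt E (Z_chain src tgt T0 e)"
  unfolding circ_def
proof
  fix U
  obtain p where p: "walk src tgt T0 (tgt e) p (src e)" "D_chain src tgt T0 e = path_chain p"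
    using D_walk[OF gr st e] by blast
  have E: "finite E" using gr by (simp add: graph_def)
  have T0: "T0 \<subseteq> E" using st by (simp add: spanning_tree_def)
  have "(\<Sum>f\<in>E. Z_chain src tgt T0 e f * cutv src tgt U f) =
     (\<Sum>f\<in>E. (if f = e then 1 else 0) * cutv src tgt U f) + (\<Sum>f\<in>E. path_chain p f * cutv src tgt U f)"
    unfolding Z_chain_def p(2) by (simp add: distrib_right sum.distrib)
  also have "\<dots> = cutv src tgt U e + (of_bool (tgt e \<in> U) - of_bool (src e \<in> U))"
    using sum_single_if[OF E e, of 1] path_chain_cut[OF E T0 p(1)] by simp
  also have "\<dots> = 0" by (simp add: cutv_def)
  finally show "(\<Sum>f\<in>E. Z_chain src tgt T0 e f * cutv src tgt U f) = 0" .
qed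

lemma Z_off:
  assumes gr: "graph V E src tgt" and st: "spanning_tree src tgt V E T0" and e: "e \<in> E"
    and f: "f \<notin> T0"
  shows "Z_chain src tgt T0 e f = (if f = e then 1 else 0)"
proof -
  obtain p where p: "walk src tgt T0 (tgt e) p (src e)" "D_chain src tgt T0 e = path_chain p"
    using D_walk[OF gr st e] by blast
  have "f \<notin> fst ` set p" using walk_edges[OF p(1)] f by auto
  then show ?thesis unfolding Z_chain_def p(2) using path_chain_supp by simp
qed

lemma Z_Ints:
  assumes gr: "graph V E src tgt" and st: "spanning_tree src tgt V E T0" and e: "e \<in> E"
  shows "Z_chain src tgt T0 e f \<in> \<int>"
proof -
  obtain p where p: "walk src tgt T0 (tgt e) p (src e)" "D_chain src tgt T0 e = path_chain p"
    using D_walk[OF gr st e] by blast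
  then show ?thesis unfolding Z_chain_def p(2) using path_chain_Ints by simp
qed

end


lemma Ints_mult_eq_1:
  fixes a b :: real
  assumes "a \<in> \<int>" "b \<in> \<int>" "a * b = 1"
  shows "a * a = 1"
proof -
  obtain m n where mn: "a = of_int m" "b = of_int n" using assms(1,2) by (auto elim!: Ints_cases)
  then have "m * n = 1" using assms(3) by (metis of_int_eq_1_iff of_int_mult)
  then have "m = 1 \<or> m = -1" by (rule pos_zmult_eq_1_iff_lemma)
  then show ?thesis using mn by auto
qed

lemma crossing_edge:
  "walk src tgt F u p v \<Longrightarrow> u \<in> U \<Longrightarrow> v \<notin> U \<Longrightarrow>
    \<exists>x\<in>set p. (src (fst x) \<in> U) \<noteq> (tgt (fst x) \<in> U)"
proof (induction p arbitrary: u)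
  case Nil then show ?case by simp
next
  case (Cons x p)
  then have x: "(if snd x then src (fst x) else tgt (fst x)) = u" "walk src tgt F (nxt src tgt x) p v"
    by (auto simp: walk_Cons_iff)
  show ?case
  proof (cases "nxt src tgt x \<in> U")
    case True
    then show ?thesis using Cons.IH[OF x(2) True Cons.prems(3)] by auto
  next
    case False
    then show ?thesis using x(1) Cons.prems(2) by (auto simp: nxt_def split: if_splits)
  qed
qed

lemma sum_single_if':
  fixes h :: "'a \<Rightarrow> real"
  assumes "finite E" "e \<in> E"
  shows "(\<Sum>f\<in>E. of_bool (f = e) * h f) = h e"
  using sum_single_if[OF assms, of 1 h] by (simp add: of_bool_def)

locale ms =
  fixes V :: "'v set" and E :: "'e set" and src tgt :: "'e \<Rightarrow> 'v" and T0 :: "'e set"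
    and es :: "'e list" and K :: "nat set"
  assumes gr: "graph V E src tgt" and st: "spanning_tree src tgt V E T0"
    and dist: "distinct es" and ses: "set es = E - T0" and Kes: "K \<subseteq> {..<length es}"
begin

definition z where "z k = Z_chain src tgt T0 (es ! k)"
definition H where "H = T0 \<union> (\<lambda>k. es ! k) ` K"
definition c where "c g = detS (\<lambda>i k. z k (g i)) K"

lemma finE: "finite E" using gr by (simp add: graph_def)
lemma finK: "finite K" using Kes finite_subset by blast
lemma T0E: "T0 \<subseteq> E" using st by (simp add: spanning_tree_def)
lemma ac0: "acyclic_edges src tgt T0" using st by (simp add: spanning_tree_def)
lemma con0: "connected_on src tgt V T0" using st by (simp add: spanning_tree_def)
lemma srcV: "f \<in> E \<Longrightarrow> src f \<in> V" and tgtV: "f \<in> E \<Longrightarrow> tgt f \<in> V"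
  using gr by (auto simp: graph_def)

lemma esK: "k \<in> K \<Longrightarrow> es ! k \<in> E \<and> es ! k \<notin> T0"
  using Kes ses nth_mem[of k es] by auto

lemma HE: "H \<subseteq> E" using T0E esK by (auto simp: H_def)
lemma T0H: "T0 \<subseteq> H" by (auto simp: H_def)
lemma esH: "k \<in> K \<Longrightarrow> es ! k \<in> H" by (auto simp: H_def)

lemma z_circ: "k \<in> K \<Longrightarrow> circ src tgt E (z k)"
  unfolding z_def using Z_circ[OF gr st] esK by blast

lemma z_off: "k \<in> K \<Longrightarrow> f \<notin> T0 \<Longrightarrow> z k f = of_bool (f = es ! k)"
  unfolding z_def using Z_off[OF gr st] esK by simp

lemma z_outH:
  assumes "k \<in> K" "f \<notin> H" shows "z k f = 0"
proof -
  have "f \<notin> T0" "f \<noteq> es ! k" using assms T0H esH by auto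
  then show ?thesis using z_off[OF assms(1)] by simp
qed

lemma z_diag:
  assumes k: "k \<in> K" and l: "l \<in> K" shows "z k (es ! l) = of_bool (k = l)"
proof -
  have "k < length es" "l < length es" using Kes k l by auto
  then have "es ! l = es ! k \<longleftrightarrow> k = l" using dist by (auto simp: nth_eq_iff_index_eq)
  then show ?thesis using z_off[OF k] esK[OF l] by simp
qed

lemma z_Ints: "k \<in> K \<Longrightarrow> z k f \<in> \<int>"
  unfolding z_def using Z_Ints[OF gr st] esK by blast

lemma Hspan:
  assumes y: "circ src tgt E y" and supp: "\<And>f. f \<in> E \<Longrightarrow> f \<notin> H \<Longrightarrow> y f = 0"
    and f: "f \<in> E"
  shows "y f = (\<Sum>k\<in>K. y (es ! k) * z k f)"
proof -
  define r where "r = (\<lambda>f. y f - (\<Sum>k\<in>K. y (es ! k) * z k f))"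
  have rc: "circ src tgt E r" unfolding r_def
    by (rule circ_comb[OF finE y finK]) (rule z_circ)
  have out: "r f' = 0" if f'E: "f' \<in> E" and f'T: "f' \<notin> T0" for f'
  proof -
    have "f' \<in> set es" using f'E f'T ses by auto
    then obtain l where l: "l < length es" "f' = es ! l" by (auto simp: in_set_conv_nth)
    show ?thesis
    proof (cases "l \<in> K")
      case True
      have "(\<Sum>k\<in>K. y (es ! k) * z k f') = (\<Sum>k\<in>K. of_bool (k = l) * y (es ! k))"
        using z_diag True l(2) by (intro sum.cong) auto
      also have "\<dots> = y (es ! l)" using sum_single_if'[OF finK True] by simp
      finally show ?thesis unfolding r_def using l by simp
    next
      case False
      have nH: "f' \<notin> H"
      proof
        assume "f' \<in> H"
        then obtain k where "k \<in> K" "f' = es ! k" using f'T by (auto simp: H_def)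
        then show False using l dist Kes False by (auto simp: nth_eq_iff_index_eq)
      qed
      then have "y f' = 0" using supp f'E by simp
      moreover have "(\<Sum>k\<in>K. y (es ! k) * z k f') = 0" using z_outH nH by simp
      ultimately show ?thesis unfolding r_def by simp
    qed
  qed
  have "r f = 0"
  proof (cases "f \<in> T0")
    case True
    then show ?thesis using forest_zero[OF finE T0E ac0 rc out True] by simp
  next
    case False then show ?thesis using out f by simp
  qed
  then show ?thesis unfolding r_def by simp
qed

end


context ms
begin

lemma cutv_reach_zero:
  assumes "f \<in> F" "U = {w. \<exists>p. walk src tgt F u p w}"
  shows "cutv src tgt U f = 0"
  using reach_closed[OF assms] by (simp add: cutv_def)

lemma tree_case:
  assumes T: "spanning_tree src tgt V H T"
  shows "card (H - T) = card K" and "\<And>g. bij_betw g K (H - T) \<Longrightarrow> c g * c g = 1"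
proof -
  define S where "S = H - T"
  have TH: "T \<subseteq> H" and conT: "connected_on src tgt V T" and acT: "acyclic_edges src tgt T"
    using T by (auto simp: spanning_tree_def)
  have TE: "T \<subseteq> E" using TH HE by auto
  have SE: "S \<subseteq> E" using HE by (auto simp: S_def)
  have finS: "finite S" using SE finE finite_subset by blast
  have ST: "s \<in> S \<Longrightarrow> s \<notin> T" for s by (auto simp: S_def)
  define w where "w s = (SOME p. walk src tgt T (tgt s) p (src s))" for s
  have w: "walk src tgt T (tgt s) (w s) (src s)" if "s \<in> S" for s
  proof -
    have "src s \<in> V" "tgt s \<in> V" using that SE srcV tgtV by auto
    then have "\<exists>p. walk src tgt T (tgt s) p (src s)" using conT unfolding connected_on_def by blast
    then show ?thesis unfolding w_def by (rule someI_ex)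
  qed
  define y where "y s f = (if f = s then 1 else 0) + path_chain (w s) f" for s f
  have y_circ: "circ src tgt E (y s)" if s: "s \<in> S" for s
    unfolding circ_def
  proof
    fix U
    have sE: "s \<in> E" using s SE by auto
    have "(\<Sum>f\<in>E. y s f * cutv src tgt U f) =
       (\<Sum>f\<in>E. (if f = s then 1 else 0) * cutv src tgt U f) + (\<Sum>f\<in>E. path_chain (w s) f * cutv src tgt U f)"
      unfolding y_def by (simp add: distrib_right sum.distrib)
    also have "\<dots> = cutv src tgt U s + (of_bool (tgt s \<in> U) - of_bool (src s \<in> U))"
      using sum_single_if[OF finE sE, of 1] path_chain_cut[OF finE TE w[OF s]] by simp
    also have "\<dots> = 0" by (simp add: cutv_def)
    finally show "(\<Sum>f\<in>E. y s f * cutv src tgt U f) = 0" .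
  qed
  have y_off: "y s f = (if f = s then 1 else 0)" if s: "s \<in> S" and f: "f \<notin> T" for s f
  proof -
    have "f \<notin> fst ` set (w s)" using walk_edges[OF w[OF s]] f by auto
    then show ?thesis unfolding y_def using path_chain_supp by simp
  qed
  have y_Ints: "y s f \<in> \<int>" for s f unfolding y_def using path_chain_Ints by simp
  have t1: "z k f = (\<Sum>s\<in>S. z k s * y s f)" if k: "k \<in> K" and f: "f \<in> E" for k f
  proof -
    define r where "r = (\<lambda>f. z k f - (\<Sum>s\<in>S. z k s * y s f))"
    have rc: "circ src tgt E r" unfolding r_def
      by (rule circ_comb[OF finE z_circ[OF k] finS]) (rule y_circ)
    have out: "r f' = 0" if f'E: "f' \<in> E" and f'T: "f' \<notin> T" for f'
    proof (cases "f' \<in> S")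
      case True
      have "(\<Sum>s\<in>S. z k s * y s f') = (\<Sum>s\<in>S. (if s = f' then 1 else 0) * z k s)"
        using y_off f'T by (intro sum.cong) auto
      also have "\<dots> = z k f'" using sum_single_if[OF finS True, of 1] by simp
      finally show ?thesis unfolding r_def by simp
    next
      case False
      then have "f' \<notin> H" using f'T by (auto simp: S_def)
      then have "z k f' = 0" using z_outH[OF k] by simp
      moreover have "(\<Sum>s\<in>S. z k s * y s f') = 0"
        using y_off f'T False by (intro sum.neutral) auto
      ultimately show ?thesis unfolding r_def by simp
    qed
    have "r f = 0"
    proof (cases "f \<in> T")
      case True
      then show ?thesis using forest_zero[OF finE TE acT rc out True] by simp
    next
      case False then show ?thesis using out f by simp
    qed
    then show ?thesis unfolding r_def by simp
  qed
  have t2: "y s f = (\<Sum>k\<in>K. y s (es ! k) * z k f)" if s: "s \<in> S" and f: "f \<in> E" for s f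
  proof (rule Hspan[OF y_circ[OF s] _ f])
    fix f' assume "f' \<in> E" "f' \<notin> H"
    then have "f' \<notin> T" "f' \<noteq> s" using TH s by (auto simp: S_def)
    then show "y s f' = 0" using y_off[OF s] by simp
  qed
  have "real (card S) = (\<Sum>s\<in>S. y s s)"
    using y_off ST by simp
  also have "\<dots> = (\<Sum>s\<in>S. \<Sum>k\<in>K. y s (es ! k) * z k s)"
    using t2 SE by (intro sum.cong) auto
  also have "\<dots> = (\<Sum>k\<in>K. \<Sum>s\<in>S. z k s * y s (es ! k))"
    by (subst sum.swap) (simp add: mult.commute)
  also have "\<dots> = (\<Sum>k\<in>K. z k (es ! k))"
    using t1 esK by (intro sum.cong) auto
  also have "\<dots> = real (card K)" using z_diag by simp
  finally show "card (H - T) = card K" unfolding S_def by simp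
  fix g assume g: "bij_betw g K (H - T)"
  then have gS: "\<And>i. i \<in> K \<Longrightarrow> g i \<in> S" and ginj: "inj_on g K"
    by (auto simp: S_def bij_betw_def)
  define Q where "Q k i = y (g i) (es ! k)" for k i
  have "detS (\<lambda>i i'. \<Sum>k\<in>K. z k (g i) * Q k i') K = detS (\<lambda>i i'. if i = i' then 1 else 0) K"
  proof (rule detS_cong)
    fix i i' assume i: "i \<in> K" and i': "i' \<in> K"
    have "(\<Sum>k\<in>K. z k (g i) * Q k i') = y (g i') (g i)"
      unfolding Q_def using t2[OF gS[OF i'], of "g i"] gS[OF i] SE
      by (auto simp: mult.commute)
    also have "\<dots> = (if g i = g i' then 1 else 0)" using y_off[OF gS[OF i'] ST[OF gS[OF i]]] by simp
    also have "\<dots> = (if i = i' then 1 else 0)" using ginj i i' by (auto simp: inj_on_def)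
    finally show "(\<Sum>k\<in>K. z k (g i) * Q k i') = (if i = i' then 1 else 0)" .
  qed
  then have "c g * detS Q K = 1"
    using detS_mult[OF finK, of "\<lambda>i k. z k (g i)" Q] detS_id[OF finK] unfolding c_def by simp
  moreover have "c g \<in> \<int>" unfolding c_def by (rule detS_Ints[OF finK]) (rule z_Ints)
  moreover have "detS Q K \<in> \<int>" unfolding Q_def by (rule detS_Ints[OF finK]) (rule y_Ints)
  ultimately show "c g * c g = 1" using Ints_mult_eq_1 by blast
qed

end


context ms
begin

lemma nontree_case:
  assumes gE: "g ` K \<subseteq> E" and ginj: "inj_on g K"
    and nt: "\<not> (g ` K \<subseteq> H \<and> spanning_tree src tgt V H (H - g ` K))"
  shows "c g = 0"
proof (cases "g ` K \<subseteq> H")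
  case False
  then obtain i0 where i0: "i0 \<in> K" "g i0 \<notin> H" by auto
  show ?thesis unfolding c_def
  proof (rule detS_dep_rows[OF finK i0(1), of "\<lambda>i. of_bool (i = i0)"])
    fix k assume k: "k \<in> K"
    show "(\<Sum>i\<in>K. of_bool (i = i0) * z k (g i)) = 0"
      using sum_single_if'[OF finK i0(1), of "\<lambda>i. z k (g i)"] z_outH[OF k i0(2)] by simp
  qed simp
next
  case SH: True
  define S where "S = g ` K"
  define T where "T = H - S"
  have TH: "T \<subseteq> H" by (auto simp: T_def)
  have TE: "T \<subseteq> E" using TH HE by auto
  have SE: "S \<subseteq> E" using gE by (simp add: S_def)
  have nst: "\<not> spanning_tree src tgt V H T" using nt SH by (simp add: T_def S_def)
  show ?thesis
  proof (cases "connected_on src tgt V T")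
    case False
    then obtain u0 v0 where uv: "u0 \<in> V" "v0 \<in> V" "\<not> (\<exists>p. walk src tgt T u0 p v0)"
      unfolding connected_on_def by blast
    define U where "U = {w. \<exists>p. walk src tgt T u0 p w}"
    have cT: "f \<in> T \<Longrightarrow> cutv src tgt U f = 0" for f by (rule cutv_reach_zero[OF _ U_def])
    have u0U: "u0 \<in> U" unfolding U_def by (rule CollectI, rule exI[of _ "[]"]) simp
    have v0U: "v0 \<notin> U" using uv(3) unfolding U_def by blast
    obtain p where p: "walk src tgt T0 u0 p v0" using con0 uv(1,2) unfolding connected_on_def by blast
    obtain x where x: "x \<in> set p" "(src (fst x) \<in> U) \<noteq> (tgt (fst x) \<in> U)"
      using crossing_edge[OF p u0U v0U] by blast
    have xT0: "fst x \<in> T0" using walk_edges[OF p] x(1) by auto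
    have cx: "cutv src tgt U (fst x) \<noteq> 0" using x(2) by (auto simp: cutv_def)
    then have "fst x \<notin> T" using cT by blast
    then have "fst x \<in> S" using xT0 T0H by (auto simp: T_def)
    then obtain i0 where i0: "i0 \<in> K" "g i0 = fst x" by (auto simp: S_def)
    show ?thesis unfolding c_def
    proof (rule detS_dep_rows[OF finK i0(1), of "\<lambda>i. cutv src tgt U (g i)"])
      show "cutv src tgt U (g i0) \<noteq> 0" using cx i0 by simp
      fix k assume k: "k \<in> K"
      have "(\<Sum>i\<in>K. cutv src tgt U (g i) * z k (g i)) = (\<Sum>s\<in>S. cutv src tgt U s * z k s)"
        unfolding S_def using sum.reindex[OF ginj, of "\<lambda>s. cutv src tgt U s * z k s"] by simp
      also have "\<dots> = (\<Sum>f\<in>E. z k f * cutv src tgt U f)"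
      proof (rule sum.mono_neutral_cong_left[OF finE SE])
        show "\<forall>f\<in>E - S. z k f * cutv src tgt U f = 0"
        proof
          fix f assume f: "f \<in> E - S"
          show "z k f * cutv src tgt U f = 0"
          proof (cases "f \<in> H")
            case True then have "f \<in> T" using f by (auto simp: T_def)
            then show ?thesis using cT by simp
          next
            case False then show ?thesis using z_outH[OF k] by simp
          qed
        qed
      qed simp
      also have "\<dots> = 0" using z_circ[OF k] unfolding circ_def by blast
      finally show "(\<Sum>i\<in>K. cutv src tgt U (g i) * z k (g i)) = 0" .
    qed
  next
    case True
    then have "\<not> acyclic_edges src tgt T" using nst TH by (simp add: spanning_tree_def)
    then obtain t w where t: "t \<in> T" and w: "walk src tgt (T - {t}) (src t) w (tgt t)"
      unfolding acyclic_edges_def by blast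
    have tE: "t \<in> E" using t TE by auto
    define y where "y f = path_chain w f - (if f = t then 1 else 0)" for f
    have TtE: "T - {t} \<subseteq> E" using TE by auto
    have yc: "circ src tgt E y" unfolding circ_def
    proof
      fix U
      have "(\<Sum>f\<in>E. y f * cutv src tgt U f) =
         (\<Sum>f\<in>E. path_chain w f * cutv src tgt U f) - (\<Sum>f\<in>E. (if f = t then 1 else 0) * cutv src tgt U f)"
        unfolding y_def by (simp add: left_diff_distrib sum_subtractf)
      also have "\<dots> = (of_bool (src t \<in> U) - of_bool (tgt t \<in> U)) - cutv src tgt U t"
        using sum_single_if[OF finE tE, of 1] path_chain_cut[OF finE TtE w] by simp
      also have "\<dots> = 0" by (simp add: cutv_def)
      finally show "(\<Sum>f\<in>E. y f * cutv src tgt U f) = 0" .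
    qed
    have y_off: "y f = 0" if "f \<notin> T" for f
    proof -
      have "f \<notin> fst ` set w" using walk_edges[OF w] that by auto
      then show ?thesis unfolding y_def using path_chain_supp that t by auto
    qed
    have yt: "y t = -1"
    proof -
      have "t \<notin> fst ` set w" using walk_edges[OF w] by auto
      then show ?thesis unfolding y_def using path_chain_supp by simp
    qed
    have span: "y f = (\<Sum>k\<in>K. y (es ! k) * z k f)" if "f \<in> E" for f
      by (rule Hspan[OF yc _ that]) (use y_off TH in blast)
    obtain k0 where k0: "k0 \<in> K" "y (es ! k0) \<noteq> 0"
    proof (rule ccontr)
      assume "\<not> thesis"
      then have "\<forall>k\<in>K. y (es ! k) = 0" using that by blast
      then have "y t = 0" using span[OF tE] by simp
      then show False using yt by simp
    qed
    show ?thesis unfolding c_def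
    proof (rule detS_dep_cols[OF finK k0(1), of "\<lambda>k. y (es ! k)"])
      show "y (es ! k0) \<noteq> 0" by (rule k0(2))
      fix i assume i: "i \<in> K"
      have giS: "g i \<in> S" using i by (simp add: S_def)
      then have "g i \<notin> T" by (simp add: T_def)
      then have "y (g i) = 0" by (rule y_off)
      moreover have "g i \<in> E" using giS SE by auto
      ultimately show "(\<Sum>k\<in>K. z k (g i) * y (es ! k)) = 0"
        using span[of "g i"] by (simp add: mult.commute)
    qed
  qed
qed

end


context ms
begin

definition Gset where "Gset = {g. g \<in> K \<rightarrow>\<^sub>E E \<and> inj_on g K}"

lemma inner_tree:
  assumes SE: "S \<subseteq> E" and SH: "S \<subseteq> H" and sp: "spanning_tree src tgt V H (H - S)"
  shows "(\<Sum>g\<in>{g. g \<in> Gset \<and> g ` K = S}. (\<Prod>i\<in>K. z i (g i)) * c g) = 1"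
proof -
  have HS: "H - (H - S) = S" using SH by auto
  have cardS: "card S = card K" using tree_case(1)[OF sp] HS by simp
  have finS: "finite S" using SE finE finite_subset by blast
  obtain g0 where g0: "bij_betw g0 K S" using finite_same_card_bij[OF finK finS] cardS by metis
  have cc: "c g0 * c g0 = 1" using tree_case(2)[OF sp] HS g0 by simp
  have g0inj: "inj_on g0 K" and g0im: "g0 ` K = S" using g0 by (auto simp: bij_betw_def)
  define j where "j g = (\<lambda>x. if x \<in> K then inv_into K g0 (g x) else x)" for g :: "nat \<Rightarrow> 'e"
  have "(\<Sum>g\<in>{g. g \<in> Gset \<and> g ` K = S}. (\<Prod>i\<in>K. z i (g i)) * c g) =
     (\<Sum>s\<in>{s. s permutes K}. (\<Prod>i\<in>K. z i (g0 (s i))) * (of_int (sign s) * c g0))"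
  proof (rule sum.reindex_bij_witness[where i="\<lambda>s. restrict (g0 \<circ> s) K" and j=j])
    fix g assume g: "g \<in> {g. g \<in> Gset \<and> g ` K = S}"
    then have gPi: "g \<in> K \<rightarrow>\<^sub>E E" and ginj: "inj_on g K" and gim: "g ` K = S"
      by (auto simp: Gset_def)
    have gin: "i \<in> K \<Longrightarrow> g i \<in> g0 ` K" for i using gim g0im by auto
    have gback: "g0 (j g i) = g i" if iK: "i \<in> K" for i
      unfolding j_def using iK f_inv_into_f[OF gin[OF iK]] by simp
    show "restrict (g0 \<circ> j g) K = g"
    proof
      fix x show "restrict (g0 \<circ> j g) K x = g x"
        using gback gPi by (cases "x \<in> K") (auto simp: PiE_def extensional_def)
    qed
    have jK: "j g ` K \<subseteq> K" unfolding j_def using gin by (auto intro: inv_into_into)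
    have jinj: "inj_on (j g) K"
    proof (rule inj_onI)
      fix x x' assume "x \<in> K" "x' \<in> K" "j g x = j g x'"
      then have "g x = g x'" using gback by metis
      then show "x = x'" using ginj \<open>x \<in> K\<close> \<open>x' \<in> K\<close> by (auto simp: inj_on_def)
    qed
    have jperm: "j g permutes K"
    proof (rule bij_imp_permutes)
      show "bij_betw (j g) K K" unfolding bij_betw_def
        using jinj endo_inj_surj[OF finK jK jinj] by simp
      show "x \<notin> K \<Longrightarrow> j g x = x" for x by (simp add: j_def)
    qed
    then show "j g \<in> {s. s permutes K}" by simp
    have "c g = detS (\<lambda>i k. z k (g0 (j g i))) K"
      unfolding c_def by (rule detS_cong) (simp add: gback)
    also have "\<dots> = of_int (sign (j g)) * c g0"
      unfolding c_def by (rule detS_row_perm[OF finK jperm])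
    finally show "(\<Prod>i\<in>K. z i (g0 (j g i))) * (of_int (sign (j g)) * c g0) = (\<Prod>i\<in>K. z i (g i)) * c g"
      using gback by simp
  next
    fix s assume s: "s \<in> {s. s permutes K}"
    then have sp: "s permutes K" by simp
    have sK: "x \<in> K \<Longrightarrow> s x \<in> K" for x using permutes_in_image[OF sp] by simp
    show "j (restrict (g0 \<circ> s) K) = s"
    proof
      fix x show "j (restrict (g0 \<circ> s) K) x = s x"
        unfolding j_def using sK g0inj permutes_not_in[OF sp] by (cases "x \<in> K") auto
    qed
    have im: "restrict (g0 \<circ> s) K ` K = S"
    proof -
      have "restrict (g0 \<circ> s) K ` K = g0 ` (s ` K)" by (auto simp: image_def)
      also have "s ` K = K" by (rule permutes_image[OF sp])
      finally show ?thesis using g0im by simp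
    qed
    have inj: "inj_on (restrict (g0 \<circ> s) K) K"
      using g0inj permutes_inj_on[OF sp] sK by (auto simp: inj_on_def)
    have "restrict (g0 \<circ> s) K \<in> K \<rightarrow>\<^sub>E E" using im SE by auto
    then show "restrict (g0 \<circ> s) K \<in> {g. g \<in> Gset \<and> g ` K = S}"
      using im inj by (simp add: Gset_def)
  qed
  also have "\<dots> = (\<Sum>s\<in>{s. s permutes K}. of_int (sign s) * (\<Prod>i\<in>K. z i (g0 (s i)))) * c g0"
    unfolding sum_distrib_right by (intro sum.cong refl) (simp add: algebra_simps)
  also have "(\<Sum>s\<in>{s. s permutes K}. of_int (sign s) * (\<Prod>i\<in>K. z i (g0 (s i)))) =
      detS (\<lambda>i k. z i (g0 k)) K" by (simp add: detS_def)
  also have "\<dots> = c g0" unfolding c_def using detS_transpose[OF finK, of "\<lambda>i k. z k (g0 i)"] by simp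
  finally show ?thesis using cc by simp
qed

lemma inner_val:
  assumes SE: "S \<subseteq> E"
  shows "(\<Sum>g\<in>{g. g \<in> Gset \<and> g ` K = S}. (\<Prod>i\<in>K. z i (g i)) * c g) =
    of_bool (S \<subseteq> H \<and> spanning_tree src tgt V H (H - S))"
proof (cases "S \<subseteq> H \<and> spanning_tree src tgt V H (H - S)")
  case True
  then show ?thesis using inner_tree[OF SE] by simp
next
  case False
  have "(\<Sum>g\<in>{g. g \<in> Gset \<and> g ` K = S}. (\<Prod>i\<in>K. z i (g i)) * c g) = 0"
  proof (rule sum.neutral, rule ballI)
    fix g assume g: "g \<in> {g. g \<in> Gset \<and> g ` K = S}"
    then have "g ` K \<subseteq> E" "inj_on g K" "g ` K = S" by (auto simp: Gset_def)
    then have "c g = 0" using nontree_case False by blast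
    then show "(\<Prod>i\<in>K. z i (g i)) * c g = 0" by simp
  qed
  then show ?thesis using False by simp
qed

lemma gram_count:
  "detS (\<lambda>i k. \<Sum>f\<in>E. z i f * z k f) K = real (card {T. spanning_tree src tgt V H T})"
proof -
  have "finite (K \<rightarrow>\<^sub>E E)" using finE finK by (simp add: finite_PiE)
  then have finG: "finite Gset" unfolding Gset_def by (rule finite_subset[rotated]) blast
  have imG: "(\<lambda>g. g ` K) ` Gset \<subseteq> Pow E" unfolding Gset_def by blast
  have "detS (\<lambda>i k. \<Sum>f\<in>E. z i f * z k f) K = (\<Sum>g\<in>Gset. (\<Prod>i\<in>K. z i (g i)) * c g)"
    unfolding Gset_def c_def by (rule detS_expand[OF finK finE])
  also have "\<dots> = (\<Sum>S\<in>Pow E. \<Sum>g\<in>{g. g \<in> Gset \<and> g ` K = S}. (\<Prod>i\<in>K. z i (g i)) * c g)"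
    using sum.group[OF finG _ imG, of "\<lambda>g. (\<Prod>i\<in>K. z i (g i)) * c g"] finE by simp
  also have "\<dots> = (\<Sum>S\<in>Pow E. of_bool (S \<subseteq> H \<and> spanning_tree src tgt V H (H - S)))"
    by (rule sum.cong[OF refl]) (rule inner_val, blast)
  also have "\<dots> = real (card (Pow E \<inter> {S. S \<subseteq> H \<and> spanning_tree src tgt V H (H - S)}))"
    using sum_of_bool_eq[of "Pow E"] finE by simp
  also have "card (Pow E \<inter> {S. S \<subseteq> H \<and> spanning_tree src tgt V H (H - S)}) =
      card {T. spanning_tree src tgt V H T}"
  proof -
    let ?A = "Pow E \<inter> {S. S \<subseteq> H \<and> spanning_tree src tgt V H (H - S)}"
    have inj: "inj_on (\<lambda>S. H - S) ?A"
    proof (rule inj_onI)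
      fix S1 S2 assume "S1 \<in> ?A" "S2 \<in> ?A" "H - S1 = H - S2"
      then show "S1 = S2" by blast
    qed
    have "(\<lambda>S. H - S) ` ?A = {T. spanning_tree src tgt V H T}"
    proof
      show "(\<lambda>S. H - S) ` ?A \<subseteq> {T. spanning_tree src tgt V H T}" by blast
      show "{T. spanning_tree src tgt V H T} \<subseteq> (\<lambda>S. H - S) ` ?A"
      proof
        fix T assume T: "T \<in> {T. spanning_tree src tgt V H T}"
        then have TH: "T \<subseteq> H" by (simp add: spanning_tree_def)
        then have eq: "H - (H - T) = T" by blast
        have "H - T \<in> ?A" using T eq HE by auto
        then show "T \<in> (\<lambda>S. H - S) ` ?A" using eq by (metis image_eqI)
      qed
    qed
    then show ?thesis using card_image[OF inj] by simp
  qed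
  finally show ?thesis .
qed

end


lemma detS_char_expand:
  fixes B :: "'a \<Rightarrow> 'a \<Rightarrow> 'b::comm_ring_1"
  assumes I: "finite I"
  shows "detS (\<lambda>i j. (if i = j then x else 0) + B i j) I = (\<Sum>K\<in>Pow I. x ^ card (I - K) * detS B K)"
proof -
  have "detS (\<lambda>i j. (if i = j then x else 0) + B i j) I =
     (\<Sum>p\<in>{p. p permutes I}. \<Sum>K\<in>Pow I. of_int (sign p) * ((\<Prod>i\<in>K. B i (p i)) * (\<Prod>i\<in>I - K. if i = p i then x else 0)))"
    unfolding detS_def
  proof (rule sum.cong[OF refl])
    fix p assume "p \<in> {p. p permutes I}"
    have "(\<Prod>i\<in>I. (if i = p i then x else 0) + B i (p i)) = (\<Prod>i\<in>I. B i (p i) + (if i = p i then x else 0))"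
      by (simp add: add.commute)
    also have "\<dots> = (\<Sum>K\<in>Pow I. (\<Prod>i\<in>K. B i (p i)) * (\<Prod>i\<in>I - K. if i = p i then x else 0))"
      by (rule prod_add[OF I])
    finally show "of_int (sign p) * (\<Prod>i\<in>I. (if i = p i then x else 0) + B i (p i)) =
      (\<Sum>K\<in>Pow I. of_int (sign p) * ((\<Prod>i\<in>K. B i (p i)) * (\<Prod>i\<in>I - K. if i = p i then x else 0)))"
      by (simp add: sum_distrib_left)
  qed
  also have "\<dots> = (\<Sum>K\<in>Pow I. \<Sum>p\<in>{p. p permutes I}. of_int (sign p) * ((\<Prod>i\<in>K. B i (p i)) * (\<Prod>i\<in>I - K. if i = p i then x else 0)))"
    by (rule sum.swap)
  also have "\<dots> = (\<Sum>K\<in>Pow I. x ^ card (I - K) * detS B K)"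
  proof (rule sum.cong[OF refl])
    fix K assume "K \<in> Pow I"
    then have KI: "K \<subseteq> I" by simp
    have pr: "(\<Prod>i\<in>I - K. if i = p i then x else 0) = (if (\<forall>i\<in>I - K. p i = i) then x ^ card (I - K) else 0)" for p
    proof (cases "\<forall>i\<in>I - K. p i = i")
      case True
      then have "(\<Prod>i\<in>I - K. if i = p i then x else 0) = (\<Prod>i\<in>I - K. x)" by (intro prod.cong) auto
      then show ?thesis using True by simp
    next
      case False
      then obtain i where "i \<in> I - K" "p i \<noteq> i" by blast
      then have "(\<Prod>i\<in>I - K. if i = p i then x else 0) = 0" using I by (intro prod_zero) (auto intro!: bexI[of _ i])
      moreover have "(if (\<forall>i\<in>I - K. p i = i) then x ^ card (I - K) else 0) = 0"
        by (rule if_not_P[OF False])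
      ultimately show ?thesis by simp
    qed
    have set_eq: "{p \<in> {p. p permutes I}. \<forall>i\<in>I - K. p i = i} = {p. p permutes K}"
    proof (intro equalityI subsetI)
      fix p assume "p \<in> {p \<in> {p. p permutes I}. \<forall>i\<in>I - K. p i = i}"
      then have p: "p permutes I" "\<forall>i\<in>I - K. p i = i" by auto
      show "p \<in> {p. p permutes K}" unfolding mem_Collect_eq permutes_def
        using p permutes_not_in[OF p(1)] unfolding permutes_def by blast
    next
      fix p assume "p \<in> {p. p permutes K}"
      then have p: "p permutes K" by simp
      then show "p \<in> {p \<in> {p. p permutes I}. \<forall>i\<in>I - K. p i = i}"
        using permutes_subset[OF p KI] permutes_not_in[OF p] by auto
    qed
    have "(\<Sum>p\<in>{p. p permutes I}. of_int (sign p) * ((\<Prod>i\<in>K. B i (p i)) * (\<Prod>i\<in>I - K. if i = p i then x else 0)))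
       = (\<Sum>p\<in>{p. p permutes I}. if (\<forall>i\<in>I - K. p i = i) then x ^ card (I - K) * (of_int (sign p) * (\<Prod>i\<in>K. B i (p i))) else 0)"
      unfolding pr by (intro sum.cong) auto
    also have "\<dots> = (\<Sum>p\<in>{p \<in> {p. p permutes I}. \<forall>i\<in>I - K. p i = i}. x ^ card (I - K) * (of_int (sign p) * (\<Prod>i\<in>K. B i (p i))))"
      by (rule sum.inter_filter[symmetric]) (simp add: finite_permutations I)
    also have "\<dots> = x ^ card (I - K) * detS B K"
      unfolding set_eq detS_def by (simp add: sum_distrib_left)
    finally show "(\<Sum>p\<in>{p. p permutes I}. of_int (sign p) * ((\<Prod>i\<in>K. B i (p i)) * (\<Prod>i\<in>I - K. if i = p i then x else 0)))
       = x ^ card (I - K) * detS B K" .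
  qed
  finally show ?thesis .
qed

lemma detS_const_poly: "detS (\<lambda>i j. [:b i j:]) K = [:detS b K:]"
  unfolding detS_def prod_to_poly
  by (simp add: of_int_poly sum_to_poly[symmetric] mult_ac)

lemma detS_neg:
  fixes b :: "'a \<Rightarrow> 'a \<Rightarrow> 'b::comm_ring_1"
  assumes K: "finite K"
  shows "detS (\<lambda>i j. - b i j) K = (-1) ^ card K * detS b K"
  unfolding detS_def sum_distrib_left
proof (rule sum.cong[OF refl])
  fix p assume "p \<in> {p. p permutes K}"
  have "(\<Prod>i\<in>K. - b i (p i)) = (\<Prod>i\<in>K. (-1) * b i (p i))" by simp
  also have "\<dots> = (\<Prod>i\<in>K. (-1::'b)) * (\<Prod>i\<in>K. b i (p i))" by (rule prod.distrib)
  also have "(\<Prod>i\<in>K. (-1::'b)) = (-1) ^ card K" by simp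
  finally show "of_int (sign p) * (\<Prod>i\<in>K. - b i (p i)) = (-1) ^ card K * (of_int (sign p) * (\<Prod>i\<in>K. b i (p i)))"
    by (simp add: algebra_simps)
qed

lemma detS_empty: "detS b {} = 1"
  unfolding detS_def by (simp add: sign_id)


lemma monom_mult_const: "monom (1::'a::comm_ring_1) n * [:c:] = monom c n"
  by (simp add: monom_altdef mult.commute)

lemma ms_count:
  assumes "ms V E src tgt T0 es K"
  shows "detS (\<lambda>i k. \<Sum>f\<in>E. Z_chain src tgt T0 (es ! i) f * Z_chain src tgt T0 (es ! k) f) K
    = real (num_spanning_trees src tgt V (T0 \<union> (\<lambda>k. es ! k) ` K))"
proof -
  interpret ms V E src tgt T0 es K by fact
  show ?thesis using gram_count unfolding z_def H_def num_spanning_trees_def by simp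
qed

theorem lemma3p1:
  fixes V :: "'v set" and E :: "'e set" and src tgt :: "'e \<Rightarrow> 'v"
    and T0 :: "'e set" and es :: "'e list"
  assumes "graph V E src tgt"
    and "connected_on src tgt V E"
    and "spanning_tree src tgt V E T0"
    and "distinct es" and "set es = E - T0"
  shows "char_poly (mesh_matrix src tgt E T0 es) =
    monom 1 (length es) +
    (\<Sum>j = 1..length es. Polynomial.smult ((-1) ^ j *
        real (\<Sum>K\<in>{K. K \<subseteq> {..<length es} \<and> card K = j}.
                num_spanning_trees src tgt V (T0 \<union> (\<lambda>k. es ! k) ` K)))
      (monom 1 (length es - j)))"
proof -
  note gr = assms(1) and st = assms(3) and dist = assms(4) and ses = assms(5)
  define N where "N = length es"
  define M where "M = mesh_matrix src tgt E T0 es"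
  define Mr where "Mr i j = M $$ (i, j)" for i j
  define tau where "tau K = num_spanning_trees src tgt V (T0 \<union> (\<lambda>k. es ! k) ` K)" for K
  have Mc: "M \<in> carrier_mat N N" unfolding M_def N_def mesh_matrix_def by simp
  have Mij: "Mr i j = (\<Sum>f\<in>E. Z_chain src tgt T0 (es ! i) f * Z_chain src tgt T0 (es ! j) f)"
    if "i < N" "j < N" for i j
    using that unfolding Mr_def M_def N_def mesh_matrix_def chain_inner_def by simp
  have cpm: "char_poly_matrix M $$ (i, j) = (if i = j then [:0, 1:] else 0) + [:- Mr i j:]"
    if "i < N" "j < N" for i j
    using that Mc unfolding char_poly_matrix_def Mr_def by simp
  have "char_poly M = detS (\<lambda>i j. char_poly_matrix M $$ (i, j)) {..<N}"
    unfolding char_poly_def det_def'[OF char_poly_matrix_closed[OF Mc]] detS_def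
    by (simp add: atLeast0LessThan)
  also have "\<dots> = detS (\<lambda>i j. (if i = j then [:0, 1:] else 0) + [:- Mr i j:]) {..<N}"
    by (rule detS_cong) (simp add: cpm)
  also have "\<dots> = (\<Sum>K\<in>Pow {..<N}. [:0, 1:] ^ card ({..<N} - K) * detS (\<lambda>i j. [:- Mr i j:]) K)"
    by (rule detS_char_expand) simp
  also have "\<dots> = (\<Sum>K\<in>Pow {..<N}. monom ((-1) ^ card K * detS Mr K) (N - card K))"
  proof (rule sum.cong[OF refl])
    fix K assume "K \<in> Pow {..<N}"
    then have KN: "K \<subseteq> {..<N}" by simp
    then have finK: "finite K" using finite_subset by blast
    have c: "card ({..<N} - K) = N - card K" using KN finK by (simp add: card_Diff_subset)
    have X: "[:0, 1:] ^ n = (monom 1 n :: real poly)" for n by (simp add: monom_altdef)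
    have d: "detS (\<lambda>i j. [:- Mr i j:]) K = [:(-1) ^ card K * detS Mr K:]"
      using detS_const_poly[of "\<lambda>i j. - Mr i j" K] detS_neg[OF finK, of Mr] by simp
    show "[:0, 1:] ^ card ({..<N} - K) * detS (\<lambda>i j. [:- Mr i j:]) K = monom ((-1) ^ card K * detS Mr K) (N - card K)"
      unfolding c X d by (rule monom_mult_const)
  qed
  also have "\<dots> = (\<Sum>j\<in>{0..N}. \<Sum>K\<in>{K. K \<in> Pow {..<N} \<and> card K = j}. monom ((-1) ^ card K * detS Mr K) (N - card K))"
  proof (rule sum.group[symmetric])
    show "card ` Pow {..<N} \<subseteq> {0..N}"
    proof
      fix n assume "n \<in> card ` Pow {..<N}"
      then obtain K where "K \<subseteq> {..<N}" "n = card K" by auto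
      then show "n \<in> {0..N}" using card_mono[of "{..<N}" K] by simp
    qed
  qed auto
  also have "\<dots> = (\<Sum>j\<in>{0..N}. monom ((-1) ^ j * (\<Sum>K\<in>{K. K \<subseteq> {..<N} \<and> card K = j}. detS Mr K)) (N - j))"
    by (intro sum.cong refl) (simp add: monom_sum sum_distrib_left)
  also have "\<dots> = monom 1 N + (\<Sum>j = 1..N. monom ((-1) ^ j * (\<Sum>K\<in>{K. K \<subseteq> {..<N} \<and> card K = j}. detS Mr K)) (N - j))"
  proof -
    have e: "{K. K \<subseteq> {..<N} \<and> card K = 0} = {{}}"
      using finite_subset[of _ "{..<N}"] by auto
    show ?thesis by (simp add: sum.atLeast_Suc_atMost e detS_empty)
  qed
  also have "(\<Sum>j = 1..N. monom ((-1) ^ j * (\<Sum>K\<in>{K. K \<subseteq> {..<N} \<and> card K = j}. detS Mr K)) (N - j)) =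
     (\<Sum>j = 1..N. Polynomial.smult ((-1) ^ j * real (\<Sum>K\<in>{K. K \<subseteq> {..<N} \<and> card K = j}. tau K)) (monom 1 (N - j)))"
  proof (rule sum.cong[OF refl])
    fix j assume "j \<in> {1..N}"
    have "(\<Sum>K\<in>{K. K \<subseteq> {..<N} \<and> card K = j}. detS Mr K) = (\<Sum>K\<in>{K. K \<subseteq> {..<N} \<and> card K = j}. real (tau K))"
    proof (rule sum.cong[OF refl])
      fix K assume "K \<in> {K. K \<subseteq> {..<N} \<and> card K = j}"
      then have KN: "K \<subseteq> {..<N}" by simp
      have msK: "ms V E src tgt T0 es K" unfolding ms_def using gr st dist ses KN N_def by simp
      have "detS Mr K = detS (\<lambda>i k. \<Sum>f\<in>E. Z_chain src tgt T0 (es ! i) f * Z_chain src tgt T0 (es ! k) f) K"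
        by (rule detS_cong) (use KN Mij in auto)
      also have "\<dots> = real (tau K)" unfolding tau_def by (rule ms_count[OF msK])
      finally show "detS Mr K = real (tau K)" .
    qed
    then show "monom ((-1) ^ j * (\<Sum>K\<in>{K. K \<subseteq> {..<N} \<and> card K = j}. detS Mr K)) (N - j) =
      Polynomial.smult ((-1) ^ j * real (\<Sum>K\<in>{K. K \<subseteq> {..<N} \<and> card K = j}. tau K)) (monom 1 (N - j))"
      by (simp add: smult_monom)
  qed
  finally show ?thesis unfolding M_def N_def tau_def .
qed


end
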